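(* Let $A$ be a finite set, $n\ge3$, and let $\rho\subseteq A^n$ be a strongly rich relation preserved by a WNU vector-function. Then there exist an abelian group structure $(A;+)$ on $A$ and bijections $\phi_1,\dots,\phi_n:A\to A$ such that $$\rho=\{(x_1,\dots,x_n)\in A^n:\ \phi_1(x_1)+\phi_2(x_2)+\dots+\phi_n(x_n)=0\}.$$
   Context: $\rho\subseteq A^n$ is strongly rich if for every tuple $(a_1,\dots,a_n)\in A^n$ and every $j\in\{1,\dots,n\}$ there is a unique $b\in A$ with $(a_1,\dots,a_{j-1},b,a_{j+1},\dots,a_n)\in\rho$. A WNU is an $m$-ary ($m\ge2$) operation $f$ on $A$ with $f(x,\dots,x)=x$ and $f(y,x,\dots,x)=f(x,y,x,\dots,x)=\dots=f(x,\dots,x,y)$. A WNU vector-function of arity $m$ is a tuple $(f_1,\dots,f_n)$ of $m$-ary WNUs on $A$; it preserves $\rho$ if for all $\alpha^1,\dots,\alpha^m\in\rho$ the tuple $(f_1(\alpha^1(1),\dots,\alpha^m(1)),\dots,f_n(\alpha^1(n),\dots,\alpha^m(n)))$ lies in $\rho$ (a single WNU $f$ preserving $\rho$ is the case $f_1=\dots=f_n=f$). *)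

theory Defs
  imports "HOL-Algebra.FiniteProduct"
begin

text \<open>The finite set A is the universe of a finite type 'a. An n-ary relation is a set of
lists of length n; coordinates are indexed 0..n-1.\<close>

definition n_ary_rel :: "nat \<Rightarrow> 'a list set \<Rightarrow> bool" where
  "n_ary_rel n \<rho> \<longleftrightarrow> (\<forall>xs\<in>\<rho>. length xs = n)"

definition strongly_rich :: "nat \<Rightarrow> 'a list set \<Rightarrow> bool" where
  "strongly_rich n \<rho> \<longleftrightarrow>
     (\<forall>xs. length xs = n \<longrightarrow> (\<forall>j<n. \<exists>!b. xs[j := b] \<in> \<rho>))"

text \<open>An m-ary operation is a function on lists, used on lists of length m.\<close>
definition WNU :: "nat \<Rightarrow> ('a list \<Rightarrow> 'a) \<Rightarrow> bool" where
  "WNU m f \<longleftrightarrow> m \<ge> 2 \<and>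
     (\<forall>x. f (replicate m x) = x) \<and>
     (\<forall>x y. \<forall>i<m. \<forall>j<m. f ((replicate m x)[i := y]) = f ((replicate m x)[j := y]))"

definition WNU_vector_function :: "nat \<Rightarrow> nat \<Rightarrow> (nat \<Rightarrow> 'a list \<Rightarrow> 'a) \<Rightarrow> bool" where
  "WNU_vector_function n m fs \<longleftrightarrow> (\<forall>i<n. WNU m (fs i))"

definition preserves_vec :: "nat \<Rightarrow> nat \<Rightarrow> (nat \<Rightarrow> 'a list \<Rightarrow> 'a) \<Rightarrow> 'a list set \<Rightarrow> bool" where
  "preserves_vec n m fs \<rho> \<longleftrightarrow>
     (\<forall>\<alpha>s. length \<alpha>s = m \<and> set \<alpha>s \<subseteq> \<rho> \<longrightarrow>
        map (\<lambda>i. fs i (map (\<lambda>\<alpha>. \<alpha> ! i) \<alpha>s)) [0..<n] \<in> \<rho>)"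

end

theory Submission
  imports Defs
begin


locale core =
  fixes N m :: nat and c :: "'a::finite" and G :: "(nat \<Rightarrow> 'a) \<Rightarrow> 'a" and W :: "(nat \<Rightarrow> 'a) \<Rightarrow> 'a"
  assumes N2: "N \<ge> 2" and m2: "m \<ge> 2"
  and Gcong: "(\<And>i. i<N \<Longrightarrow> y i = y' i) \<Longrightarrow> G y = G y'"
  and Wcong: "(\<And>k. k<m \<Longrightarrow> x k = x' k) \<Longrightarrow> W x = W x'"
  and hom: "G (\<lambda>i. W (\<lambda>k. Y k i)) = W (\<lambda>k. G (Y k))"
  and loop: "j<N \<Longrightarrow> G (\<lambda>i. if i = j then v else c) = v"
  and ginj: "j2<N \<Longrightarrow> G (z(j2:=a)) = G (z(j2:=b)) \<Longrightarrow> a = b"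
  and gsurj: "j3<N \<Longrightarrow> \<exists>a. G (z2(j3:=a)) = u"
  and idem: "W (\<lambda>_. u2) = u2"
  and wnu: "i<m \<Longrightarrow> j4<m \<Longrightarrow> W (\<lambda>k. if k=i then v2 else u3) = W (\<lambda>k. if k=j4 then v2 else u3)"
begin

definition pl :: "'a \<Rightarrow> 'a \<Rightarrow> 'a" where
  "pl a b = G (\<lambda>i::nat. if i = 0 then a else if i = 1 then b else c)"
definition al :: "'a \<Rightarrow> 'a" where
  "al x = W (\<lambda>k::nat. if k = 0 then x else c)"

lemma Gc: "G (\<lambda>_. c) = c"
  using loop[of 0 c] N2 by simp

lemma wsum: "W (\<lambda>k::nat. pl (a k) (b k)) = pl (W a) (W b)"
proof -
  have h1: "G (\<lambda>i::nat. W (\<lambda>k::nat. if i = 0 then a k else if i = 1 then b k else c)) = W (\<lambda>k::nat. pl (a k) (b k))"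
    using hom[of "\<lambda>k i. if i = 0 then a k else if i = 1 then b k else c"] by (simp add: pl_def)
  have h2: "(\<lambda>i::nat. W (\<lambda>k::nat. if i = 0 then a k else if i = 1 then b k else c))
     = (\<lambda>i::nat. if i = 0 then W a else if i = 1 then W b else c)"
  proof
    fix i show "W (\<lambda>k::nat. if i = 0 then a k else if i = 1 then b k else c) = (if i = 0 then W a else if i = 1 then W b else c)"
      by (cases "i=0"; cases "i=1"; simp add: idem)
  qed
  have "pl (W a) (W b) = G (\<lambda>i::nat. W (\<lambda>k::nat. if i = 0 then a k else if i = 1 then b k else c))"
    unfolding pl_def by (simp only: h2)
  thus ?thesis using h1 by simp
qed

lemma pl_c_left: "pl c b = b"
proof -
  have "(\<lambda>i::nat. if i = 0 then c else if i = 1 then b else c) = (\<lambda>i::nat. if i = 1 then b else c)" by (rule ext) auto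
  moreover have "G (\<lambda>i::nat. if i = 1 then b else c) = b" using loop[of 1 b] N2 by simp
  ultimately show ?thesis unfolding pl_def by argo
qed

lemma pl_c_right: "pl a c = a"
proof -
  have "(\<lambda>i::nat. if i = 0 then a else if i = 1 then c else c) = (\<lambda>i::nat. if i = 0 then a else c)" by (rule ext) auto
  moreover have "G (\<lambda>i::nat. if i = 0 then a else c) = a" using loop[of 0 a] N2 by simp
  ultimately show ?thesis unfolding pl_def by argo
qed

lemma al_c: "al c = c"
proof -
  have "(\<lambda>k::nat. if k = 0 then c else c) = (\<lambda>_::nat. c)" by auto
  thus ?thesis by (simp add: al_def idem)
qed

lemma W1: "j<m \<Longrightarrow> W (\<lambda>k::nat. if k = j then x else c) = al x"
  unfolding al_def using wnu[of j 0] m2 by simp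

lemma al_G: "al (G y) = G (\<lambda>i::nat. al (y i))"
proof -
  have h1: "G (\<lambda>i::nat. W (\<lambda>k::nat. if k = 0 then y i else c)) = W (\<lambda>k::nat. G (\<lambda>i::nat. if k = 0 then y i else c))"
    by (rule hom)
  have h2: "(\<lambda>k::nat. G (\<lambda>i::nat. if k = 0 then y i else c)) = (\<lambda>k::nat. if k = 0 then G y else c)"
  proof
    fix k show "G (\<lambda>i::nat. if k = 0 then y i else c) = (if k = 0 then G y else c)"
      by (cases "k=0"; simp add: Gc)
  qed
  have "W (\<lambda>k::nat. G (\<lambda>i::nat. if k = 0 then y i else c)) = W (\<lambda>k::nat. if k = 0 then G y else c)"
    by (simp only: h2)
  with h1 show ?thesis unfolding al_def by simp
qed

lemma al_pl: "al (pl a b) = pl (al a) (al b)"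
proof -
  have "al (pl a b) = G (\<lambda>i::nat. al (if i = 0 then a else if i = 1 then b else c))"
    unfolding pl_def by (rule al_G)
  also have "(\<lambda>i::nat. al (if i = 0 then a else if i = 1 then b else c)) = (\<lambda>i::nat. if i = 0 then al a else if i = 1 then al b else c)"
    by (auto simp: al_c)
  finally show ?thesis by (simp add: pl_def)
qed

lemma kernel: assumes "al x = c" shows "x = c"
proof -
  define g where "g k = W (\<lambda>l::nat. if l < k then x else c)" for k
  have step: "g (Suc k) = g k" if "k < m" for k
  proof -
    have "(\<lambda>l::nat. pl (if l < k then x else c) (if l = k then x else c)) = (\<lambda>l::nat. if l < Suc k then x else c)"
      by (auto simp: pl_c_left pl_c_right)
    hence "g (Suc k) = pl (g k) (W (\<lambda>l::nat. if l = k then x else c))"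
      using wsum[of "\<lambda>l::nat. if l < k then x else c" "\<lambda>l::nat. if l = k then x else c"] by (simp add: g_def)
    also have "\<dots> = g k" using W1[OF that] assms by (simp add: pl_c_right)
    finally show ?thesis .
  qed
  have "k \<le> m \<Longrightarrow> g k = c" for k
    by (induction k) (auto simp: g_def idem step[unfolded g_def])
  hence "g m = c" by simp
  moreover have "g m = x" unfolding g_def using Wcong[of "\<lambda>l::nat. if l < m then x else c" "\<lambda>_. x"] idem by simp
  ultimately show ?thesis by simp
qed

lemma cancel_left: "pl a b = pl a' b \<Longrightarrow> a = a'"
proof -
  assume h: "pl a b = pl a' b"
  let ?y = "\<lambda>i::nat. if i = 1 then b else c"
  have e: "?y(0:=z) = (\<lambda>i::nat. if i = 0 then z else if i = 1 then b else c)" for z by auto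
  have "G (?y(0:=a)) = G (?y(0:=a'))" unfolding e using h unfolding pl_def .
  thus ?thesis using ginj[of 0 ?y a a'] N2 by simp
qed

lemma div_ex: "\<exists>d. pl d y = x"
proof -
  let ?y = "\<lambda>i::nat. if i = 1 then y else c"
  have e: "?y(0:=z) = (\<lambda>i::nat. if i = 0 then z else if i = 1 then y else c)" for z by auto
  obtain a where "G (?y(0:=a)) = x" using gsurj[of 0 ?y x] N2 by auto
  hence "pl a y = x" unfolding e pl_def .
  thus ?thesis ..
qed

lemma al_inj: "inj al"
proof
  fix x y assume h: "al x = al y"
  obtain d where d: "pl d y = x" using div_ex by blast
  have "pl (al d) (al y) = pl c (al y)" using h d al_pl pl_c_left by metis
  hence "al d = c" by (rule cancel_left)
  hence "d = c" by (rule kernel)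
  thus "x = y" using d pl_c_left by simp
qed

lemma al_surj: "surj al"
  using finite_UNIV_inj_surj[OF finite_UNIV al_inj] .

lemma W2: "W (\<lambda>k::nat. if k = 0 then a else if k = 1 then b else c) = pl (al a) (al b)"
      "W (\<lambda>k::nat. if k = 0 then a else if k = 1 then b else c) = pl (al b) (al a)"
proof -
  have "(\<lambda>k::nat. pl (if k = 0 then a else c) (if k = 1 then b else c)) = (\<lambda>k::nat. if k = 0 then a else if k = 1 then b else c)"
    by (auto simp: pl_c_left pl_c_right)
  thus "W (\<lambda>k::nat. if k = 0 then a else if k = 1 then b else c) = pl (al a) (al b)"
    using wsum[of "\<lambda>k::nat. if k = 0 then a else c" "\<lambda>k::nat. if k = 1 then b else c"] W1[of 1 b] m2
    by (simp add: al_def)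
  have "(\<lambda>k::nat. pl (if k = 1 then b else c) (if k = 0 then a else c)) = (\<lambda>k::nat. if k = 0 then a else if k = 1 then b else c)"
    by (auto simp: pl_c_left pl_c_right)
  thus "W (\<lambda>k::nat. if k = 0 then a else if k = 1 then b else c) = pl (al b) (al a)"
    using wsum[of "\<lambda>k::nat. if k = 1 then b else c" "\<lambda>k::nat. if k = 0 then a else c"] W1[of 1 b] m2
    by (simp add: al_def)
qed

lemma comm: "pl x y = pl y x"
proof -
  obtain a b where "x = al a" "y = al b" using al_surj by (metis surjD)
  thus ?thesis using W2[of a b] by simp
qed

lemma assoc: "pl (pl x y) z = pl x (pl y z)"
proof -
  obtain a b d where ab: "x = al a" "y = al b" "z = al d" using al_surj by (metis surjD)
  have "(\<lambda>k::nat. pl (if k = 0 then a else c) (if k = 0 then b else if k = 1 then d else c))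
      = (\<lambda>k::nat. if k = 0 then pl a b else if k = 1 then d else c)"
    by (auto simp: pl_c_left pl_c_right)
  hence "W (\<lambda>k::nat. if k = 0 then pl a b else if k = 1 then d else c) = pl (al a) (pl (al b) (al d))"
    using wsum[of "\<lambda>k::nat. if k = 0 then a else c" "\<lambda>k::nat. if k = 0 then b else if k = 1 then d else c"] W2(1)[of b d]
    by (simp add: al_def)
  moreover have "W (\<lambda>k::nat. if k = 0 then pl a b else if k = 1 then d else c) = pl (pl (al a) (al b)) (al d)"
    using W2(1)[of "pl a b" d] al_pl by simp
  ultimately show ?thesis using ab by simp
qed

definition Grp :: "'a monoid" where "Grp = \<lparr>carrier = UNIV, mult = pl, one = c\<rparr>"

lemma grp: "comm_group Grp"
proof (rule comm_groupI)
  fix x show "\<exists>y\<in>carrier Grp. y \<otimes>\<^bsub>Grp\<^esub> x = \<one>\<^bsub>Grp\<^esub>"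
    using div_ex[of x c] by (simp add: Grp_def)
qed (auto simp: Grp_def assoc pl_c_left intro: comm)

lemma split: "j < N \<Longrightarrow> G y = pl (G (y(j:=c))) (y j)"
proof -
  assume j: "j < N"
  define Y where "Y k i = (if k = 0 then (if i = j then c else y i) else if k = 1 then (if i = j then y j else c) else c)" for k i :: nat
  have "G (\<lambda>i::nat. W (\<lambda>k::nat. Y k i)) = W (\<lambda>k::nat. G (Y k))" by (rule hom)
  moreover have "(\<lambda>k::nat. G (Y k)) = (\<lambda>k::nat. if k = 0 then G (y(j:=c)) else if k = 1 then y j else c)"
  proof
    fix k show "G (Y k) = (if k = 0 then G (y(j:=c)) else if k = 1 then y j else c)"
    proof -
      have "Y 0 = y(j:=c)" by (auto simp: Y_def)
      moreover have "Y 1 = (\<lambda>i::nat. if i = j then y j else c)" by (auto simp: Y_def)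
      moreover have "k \<noteq> 0 \<Longrightarrow> k \<noteq> 1 \<Longrightarrow> Y k = (\<lambda>_. c)" by (auto simp: Y_def)
      ultimately show ?thesis using loop[OF j] Gc by auto
    qed
  qed
  moreover have "(\<lambda>i::nat. W (\<lambda>k::nat. Y k i)) = (\<lambda>i::nat. al (y i))"
  proof
    fix i show "W (\<lambda>k::nat. Y k i) = al (y i)"
    proof (cases "i = j")
      case True
      hence "(\<lambda>k::nat. Y k i) = (\<lambda>k::nat. if k = 1 then y j else c)" by (auto simp: Y_def)
      thus ?thesis using W1[of 1 "y j"] m2 True by simp
    next
      case False
      hence "(\<lambda>k::nat. Y k i) = (\<lambda>k::nat. if k = 0 then y i else c)" by (auto simp: Y_def)
      thus ?thesis by (simp add: al_def)
    qed
  qed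
  ultimately have "al (G y) = pl (al (G (y(j:=c)))) (al (y j))"
    using W2(1) al_G by simp
  hence "al (G y) = al (pl (G (y(j:=c))) (y j))" by (simp add: al_pl)
  thus ?thesis using al_inj by (simp add: inj_eq)
qed

lemma G_prod: "G y = finprod Grp y {..<N}"
proof -
  interpret comm_group Grp by (rule grp)
  have carr: "carrier Grp = UNIV" and mul: "\<And>x y. x \<otimes>\<^bsub>Grp\<^esub> y = pl x y" and one: "\<one>\<^bsub>Grp\<^esub> = c"
    by (simp_all add: Grp_def)
  have "k \<le> N \<Longrightarrow> G (\<lambda>i::nat. if i < k then y i else c) = finprod Grp y {..<k}" for k
  proof (induction k)
    case 0 thus ?case by (simp add: Gc one)
  next
    case (Suc k)
    have "G (\<lambda>i::nat. if i < Suc k then y i else c) =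
        pl (G ((\<lambda>i::nat. if i < Suc k then y i else c)(k:=c))) (y k)"
      using split[where j=k and y="\<lambda>i::nat. if i < Suc k then y i else c"] Suc.prems by simp
    also have "(\<lambda>i::nat. if i < Suc k then y i else c)(k:=c) = (\<lambda>i::nat. if i < k then y i else c)" by auto
    finally have "G (\<lambda>i::nat. if i < Suc k then y i else c) = pl (finprod Grp y {..<k}) (y k)"
      using Suc by simp
    moreover have "finprod Grp y {..<Suc k} = y k \<otimes>\<^bsub>Grp\<^esub> finprod Grp y {..<k}"
      by (simp add: lessThan_Suc carr)
    ultimately show ?case by (simp add: mul comm)
  qed
  from this[of N] show ?thesis using Gcong[of "\<lambda>i::nat. if i < N then y i else c" y] by simp
qed

end


theorem mainTheorem12:
  fixes n :: nat and \<rho> :: "('a::finite) list set"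
  assumes "n \<ge> 3"
    and "n_ary_rel n \<rho>"
    and "strongly_rich n \<rho>"
    and "\<exists>m fs. WNU_vector_function n m fs \<and> preserves_vec n m fs \<rho>"
  shows "\<exists>(G :: 'a monoid) \<phi>. comm_group G \<and> carrier G = UNIV \<and>
           (\<forall>i<n. bij (\<phi> i :: 'a \<Rightarrow> 'a)) \<and>
           \<rho> = {xs. length xs = n \<and> finprod G (\<lambda>i. \<phi> i (xs ! i)) {..<n} = \<one>\<^bsub>G\<^esub>}"
proof -
  from assms(4) obtain m fs where wv: "WNU_vector_function n m fs" and pr: "preserves_vec n m fs \<rho>"
    by blast
  define N where "N = n - 1"
  have nN: "n = Suc N" and N2: "N \<ge> 2" using assms(1) by (auto simp: N_def)
  have wnu: "\<And>i. i<n \<Longrightarrow> WNU m (fs i)" using wv unfolding WNU_vector_function_def by blast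
  have m2: "m \<ge> 2" using wnu[of 0] nN unfolding WNU_def by simp
  have idem: "\<And>i x. i<n \<Longrightarrow> fs i (replicate m x) = x" using wnu unfolding WNU_def by blast
  have wsym: "\<And>i x y a b. i<n \<Longrightarrow> a<m \<Longrightarrow> b<m \<Longrightarrow>
      fs i ((replicate m x)[a:=y]) = fs i ((replicate m x)[b:=y])"
    using wnu unfolding WNU_def by blast
  have len: "\<And>xs. xs \<in> \<rho> \<Longrightarrow> length xs = n" using assms(2) unfolding n_ary_rel_def by blast
  have sr: "\<And>xs j. length xs = n \<Longrightarrow> j < n \<Longrightarrow> \<exists>!b. xs[j:=b] \<in> \<rho>"
    using assms(3) unfolding strongly_rich_def by blast
  have pres: "\<And>\<alpha>s. length \<alpha>s = m \<Longrightarrow> set \<alpha>s \<subseteq> \<rho> \<Longrightarrow>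
      map (\<lambda>i. fs i (map (\<lambda>\<alpha>. \<alpha> ! i) \<alpha>s)) [0..<n] \<in> \<rho>"
    using pr unfolding preserves_vec_def by blast
  obtain e where e: "e \<in> \<rho>" using sr[of "replicate n undefined" 0] nN by auto
  have le: "length e = n" using len e by blast
  have NN: "N < n" using nN by simp
  define \<sigma> where "\<sigma> i x = (THE b. e[i:=x, N:=b] \<in> \<rho>)" for i x
  have ex1: "\<exists>!b. e[i:=x, N:=b] \<in> \<rho>" if "i<N" for i x
    using sr[of "e[i:=x]" N] le NN by simp
  have \<sigma>ex: "e[i:=x, N:=\<sigma> i x] \<in> \<rho>" if "i<N" for i x
    unfolding \<sigma>_def using theI'[OF ex1[OF that]] .
  have \<sigma>un: "\<sigma> i x = b" if "i<N" "e[i:=x, N:=b] \<in> \<rho>" for i x b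
    unfolding \<sigma>_def using the1_equality[OF ex1[OF that(1)] that(2)] .
  have \<sigma>inj: "inj (\<sigma> i)" if i: "i<N" for i
  proof
    fix x y assume h: "\<sigma> i x = \<sigma> i y"
    have sw: "e[i:=z, N:=b] = (e[N:=b])[i:=z]" for z b using i by (simp add: list_update_swap)
    have "(e[N:=b])[i:=x] \<in> \<rho>" "(e[N:=b])[i:=y] \<in> \<rho>" if "b = \<sigma> i x" for b
      using \<sigma>ex[OF i, of x] \<sigma>ex[OF i, of y] h that sw by auto
    moreover have "\<exists>!z. (e[N:=\<sigma> i x])[i:=z] \<in> \<rho>" using sr[of "e[N:=\<sigma> i x]" i] le i NN by simp
    ultimately show "x = y" by blast
  qed
  have \<sigma>bij: "bij (\<sigma> i)" if "i<N" for i
    using \<sigma>inj[OF that] by (simp add: bij_def finite_UNIV_inj_surj)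
  define \<tau> where "\<tau> i = inv_into UNIV (\<sigma> i)" for i
  have \<sigma>\<tau>: "\<sigma> i (\<tau> i y) = y" if "i<N" for i y
    unfolding \<tau>_def using \<sigma>bij[OF that] by (simp add: bij_def surj_f_inv_f)
  have \<tau>\<sigma>: "\<tau> i (\<sigma> i x) = x" if "i<N" for i x
    unfolding \<tau>_def using \<sigma>inj[OF that] by (simp add: inv_f_f)
  define c where "c = e ! N"
  have \<tau>c: "\<tau> i c = e ! i" if "i<N" for i
  proof -
    have "e[i:=e!i, N:=e!N] = e" by simp
    hence "\<sigma> i (e!i) = c" using \<sigma>un[OF that, of "e!i" "e!N"] e by (simp add: c_def)
    thus ?thesis using \<tau>\<sigma>[OF that] by metis
  qed
  have iso: "\<sigma> i (fs i xs) = fs N (map (\<sigma> i) xs)" if i: "i<N" and lx: "length xs = m" for i xs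
  proof -
    let ?\<alpha>s = "map (\<lambda>x. e[i:=x, N:=\<sigma> i x]) xs"
    have "map (\<lambda>j. fs j (map (\<lambda>\<alpha>. \<alpha> ! j) ?\<alpha>s)) [0..<n] \<in> \<rho>"
      using pres[of ?\<alpha>s] lx \<sigma>ex[OF i] by auto
    moreover have "map (\<lambda>j. fs j (map (\<lambda>\<alpha>. \<alpha> ! j) ?\<alpha>s)) [0..<n] = e[i:=fs i xs, N:=fs N (map (\<sigma> i) xs)]"
    proof (rule nth_equalityI)
      fix j assume "j < length (map (\<lambda>j. fs j (map (\<lambda>\<alpha>. \<alpha> ! j) ?\<alpha>s)) [0..<n])"
      hence j: "j < n" by simp
      show "map (\<lambda>j. fs j (map (\<lambda>\<alpha>. \<alpha> ! j) ?\<alpha>s)) [0..<n] ! j = e[i:=fs i xs, N:=fs N (map (\<sigma> i) xs)] ! j"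
      proof (cases "j = N")
        case True thus ?thesis using j le by (simp add: comp_def)
      next
        case jN: False
        show ?thesis
        proof (cases "j = i")
          case True thus ?thesis using j le jN by (simp add: comp_def)
        next
          case False
          hence "map (\<lambda>x. e[i:=x, N:=\<sigma> i x] ! j) xs = replicate m (e!j)"
            using jN lx by (simp add: map_replicate_const)
          thus ?thesis using j le jN False idem[OF j] by (simp add: comp_def)
        qed
      qed
    qed (simp add: le)
    ultimately show ?thesis using \<sigma>un[OF i] by metis
  qed
  have iso\<tau>: "fs i (map (\<tau> i) ys) = \<tau> i (fs N ys)" if i: "i<N" and ly: "length ys = m" for i ys
  proof -
    have "\<sigma> i (fs i (map (\<tau> i) ys)) = fs N ys"
      using iso[OF i, of "map (\<tau> i) ys"] ly \<sigma>\<tau>[OF i] by (simp add: comp_def)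
    thus ?thesis using \<tau>\<sigma>[OF i] by metis
  qed
  define L where "L y b = map (\<lambda>i. if i < N then \<tau> i (y i) else b) [0..<n]" for y b
  have lenL: "length (L y b) = n" for y b by (simp add: L_def)
  have LN: "L y b ! N = b" for y b using NN by (simp add: L_def)
  have Li: "i < N \<Longrightarrow> L y b ! i = \<tau> i (y i)" for y b i using NN by (simp add: L_def)
  have Lnth: "i < n \<Longrightarrow> L y b ! i = (if i = N then b else \<tau> i (y i))" for y b i
    using nN by (auto simp: L_def nth_append)
  have LupdN: "(L y b)[N:=b'] = L y b'" for y b b'
    by (rule nth_equalityI) (auto simp: lenL nth_list_update Lnth)
  have Lupd: "(L y b)[j:=\<tau> j a] = L (y(j:=a)) b" if "j < N" for y b j a
    by (rule nth_equalityI) (use that in \<open>auto simp: lenL nth_list_update Lnth\<close>)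
  define Gf where "Gf y = (THE b. L y b \<in> \<rho>)" for y
  have ex2: "\<exists>!b. L y b \<in> \<rho>" for y
    using sr[of "L y undefined" N] lenL NN by (simp add: LupdN)
  have Gex: "L y (Gf y) \<in> \<rho>" for y unfolding Gf_def using theI'[OF ex2] .
  have Gun: "L y b \<in> \<rho> \<Longrightarrow> Gf y = b" for y b unfolding Gf_def using the1_equality[OF ex2] .
  define W where "W x = fs N (map x [0..<m])" for x
  interpret core N m c Gf W
  proof
    show "2 \<le> N" by (rule N2)
    show "2 \<le> m" by (rule m2)
  next
    fix y y' :: "nat \<Rightarrow> 'a" assume "\<And>i. i < N \<Longrightarrow> y i = y' i"
    hence "L y = L y'" unfolding L_def by (intro ext map_cong) auto
    thus "Gf y = Gf y'" unfolding Gf_def by simp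
  next
    fix x x' :: "nat \<Rightarrow> 'a" assume "\<And>k. k < m \<Longrightarrow> x k = x' k"
    thus "W x = W x'" unfolding W_def by (intro arg_cong[where f="fs N"] map_cong) auto
  next
    fix Y :: "nat \<Rightarrow> nat \<Rightarrow> 'a"
    let ?\<alpha>s = "map (\<lambda>k. L (Y k) (Gf (Y k))) [0..<m]"
    have "map (\<lambda>j. fs j (map (\<lambda>\<alpha>. \<alpha> ! j) ?\<alpha>s)) [0..<n] \<in> \<rho>"
      using pres[of ?\<alpha>s] Gex by auto
    moreover have "map (\<lambda>j. fs j (map (\<lambda>\<alpha>. \<alpha> ! j) ?\<alpha>s)) [0..<n] = L (\<lambda>i. W (\<lambda>k. Y k i)) (W (\<lambda>k. Gf (Y k)))"
    proof (rule nth_equalityI)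
      fix j assume "j < length (map (\<lambda>j. fs j (map (\<lambda>\<alpha>. \<alpha> ! j) ?\<alpha>s)) [0..<n])"
      hence j: "j < n" by simp
      show "map (\<lambda>j. fs j (map (\<lambda>\<alpha>. \<alpha> ! j) ?\<alpha>s)) [0..<n] ! j = L (\<lambda>i. W (\<lambda>k. Y k i)) (W (\<lambda>k. Gf (Y k))) ! j"
      proof (cases "j < N")
        case True
        have "map (\<lambda>\<alpha>. \<alpha> ! j) ?\<alpha>s = map (\<tau> j) (map (\<lambda>k. Y k j) [0..<m])"
          using True by (simp add: Li comp_def)
        thus ?thesis using True j iso\<tau>[OF True, of "map (\<lambda>k. Y k j) [0..<m]"] by (simp add: Li W_def comp_def)
      next
        case False
        hence jN: "j = N" using j nN by simp
        have "map (\<lambda>\<alpha>. \<alpha> ! j) ?\<alpha>s = map (\<lambda>k. Gf (Y k)) [0..<m]"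
          using jN by (simp add: LN comp_def)
        thus ?thesis using jN j by (simp add: LN W_def comp_def)
      qed
    qed (simp add: lenL)
    ultimately show "Gf (\<lambda>i. W (\<lambda>k. Y k i)) = W (\<lambda>k. Gf (Y k))" using Gun by metis
  next
    fix j v assume j: "j < N"
    have "L (\<lambda>i. if i = j then v else c) v = e[j:=\<tau> j v, N:=\<sigma> j (\<tau> j v)]"
      by (rule nth_equalityI) (use j in \<open>auto simp: lenL le nth_list_update Lnth \<sigma>\<tau> \<tau>c nN\<close>)
    thus "Gf (\<lambda>i. if i = j then v else c) = v" using Gun \<sigma>ex[OF j] \<sigma>\<tau>[OF j] by metis
  next
    fix j2 z a b assume j: "j2 < N" and h: "Gf (z(j2 := a)) = Gf (z(j2 := b))"
    define g where "g = Gf (z(j2:=a))"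
    have "(L z g)[j2:=\<tau> j2 a] \<in> \<rho>" "(L z g)[j2:=\<tau> j2 b] \<in> \<rho>"
      using Gex[of "z(j2:=a)"] Gex[of "z(j2:=b)"] h Lupd[OF j] by (auto simp: g_def)
    moreover have "\<exists>!x. (L z g)[j2:=x] \<in> \<rho>" using sr[of "L z g" j2] lenL j nN by simp
    ultimately have "\<tau> j2 a = \<tau> j2 b" by blast
    thus "a = b" using \<sigma>\<tau>[OF j] by metis
  next
    fix j3 z2 u assume j: "j3 < N"
    obtain b where "(L z2 u)[j3:=b] \<in> \<rho>" using sr[of "L z2 u" j3] lenL j nN by auto
    hence "L (z2(j3:=\<sigma> j3 b)) u \<in> \<rho>" using Lupd[OF j, of z2 u "\<sigma> j3 b"] \<tau>\<sigma>[OF j] by simp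
    thus "\<exists>a. Gf (z2(j3 := a)) = u" using Gun by blast
  next
    fix u2 show "W (\<lambda>_. u2) = u2" unfolding W_def using idem[of N] NN by (simp add: map_replicate_const)
  next
    fix i j4 and v2 u3 :: 'a assume ij: "i < m" "j4 < m"
    have mp: "map (\<lambda>k. if k = a then v2 else u3) [0..<m] = (replicate m u3)[a:=v2]" for a
      by (rule nth_equalityI) (auto simp: nth_list_update)
    show "W (\<lambda>k. if k = i then v2 else u3) = W (\<lambda>k. if k = j4 then v2 else u3)"
      unfolding W_def mp using wsym[OF NN ij] .
  qed
  have char: "xs \<in> \<rho> \<longleftrightarrow> length xs = n \<and> xs ! N = Gf (\<lambda>i. \<sigma> i (xs ! i))" for xs
  proof -
    have eq: "L (\<lambda>i. \<sigma> i (xs ! i)) b = xs[N:=b]" if lx: "length xs = n" for b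
    proof (rule nth_equalityI)
      fix i assume "i < length (L (\<lambda>i. \<sigma> i (xs ! i)) b)"
      hence i: "i < n" by (simp add: lenL)
      have "i \<noteq> N \<Longrightarrow> i < N" using i nN by simp
      thus "L (\<lambda>i. \<sigma> i (xs ! i)) b ! i = xs[N:=b] ! i"
        using i lx \<tau>\<sigma>[of i] by (auto simp: Lnth nth_list_update)
    qed (simp add: lenL lx)
    show ?thesis
    proof
      assume x: "xs \<in> \<rho>"
      hence l: "length xs = n" by (rule len)
      hence "L (\<lambda>i. \<sigma> i (xs ! i)) (xs!N) \<in> \<rho>" using eq x by simp
      thus "length xs = n \<and> xs ! N = Gf (\<lambda>i. \<sigma> i (xs ! i))" using Gun l by metis
    next
      assume "length xs = n \<and> xs ! N = Gf (\<lambda>i. \<sigma> i (xs ! i))"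
      hence l: "length xs = n" and h: "xs ! N = Gf (\<lambda>i. \<sigma> i (xs ! i))" by auto
      have "L (\<lambda>i. \<sigma> i (xs ! i)) (xs!N) = xs" using eq[OF l, of "xs!N"] by simp
      moreover have "L (\<lambda>i. \<sigma> i (xs ! i)) (xs!N) \<in> \<rho>" using Gex h by simp
      ultimately show "xs \<in> \<rho>" by simp
    qed
  qed
  interpret Gr: comm_group Grp by (rule grp)
  have carr: "carrier Grp = UNIV" by (simp add: Grp_def)
  define \<phi> where "\<phi> i = (if i < N then \<sigma> i else if i = N then (\<lambda>x. inv\<^bsub>Grp\<^esub> x) else id)" for i
  have bij: "\<forall>i<n. bij (\<phi> i)"
  proof (intro allI impI)
    fix i assume "i < n"
    show "bij (\<phi> i)"
    proof (cases "i < N")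
      case True thus ?thesis using \<sigma>bij by (simp add: \<phi>_def)
    next
      case False
      hence "i = N" using \<open>i<n\<close> nN by simp
      moreover have "bij (\<lambda>x. inv\<^bsub>Grp\<^esub> x)"
        by (rule o_bij[where g="\<lambda>x. inv\<^bsub>Grp\<^esub> x"]) (auto simp: carr)
      ultimately show ?thesis by (simp add: \<phi>_def)
    qed
  qed
  have prodeq: "finprod Grp (\<lambda>i. \<phi> i (xs ! i)) {..<n} = inv\<^bsub>Grp\<^esub> (xs!N) \<otimes>\<^bsub>Grp\<^esub> Gf (\<lambda>i. \<sigma> i (xs ! i))" for xs
  proof -
    have "finprod Grp (\<lambda>i. \<phi> i (xs ! i)) {..<n} = \<phi> N (xs ! N) \<otimes>\<^bsub>Grp\<^esub> finprod Grp (\<lambda>i. \<phi> i (xs ! i)) {..<N}"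
      by (simp add: nN lessThan_Suc carr)
    also have "finprod Grp (\<lambda>i. \<phi> i (xs ! i)) {..<N} = finprod Grp (\<lambda>i. \<sigma> i (xs ! i)) {..<N}"
      by (rule Gr.finprod_cong') (auto simp: carr \<phi>_def)
    also have "\<dots> = Gf (\<lambda>i. \<sigma> i (xs ! i))" by (rule G_prod[symmetric])
    finally show ?thesis by (simp add: \<phi>_def)
  qed
  have inveq: "inv\<^bsub>Grp\<^esub> a \<otimes>\<^bsub>Grp\<^esub> b = \<one>\<^bsub>Grp\<^esub> \<longleftrightarrow> b = a" for a b
  proof
    assume "inv\<^bsub>Grp\<^esub> a \<otimes>\<^bsub>Grp\<^esub> b = \<one>\<^bsub>Grp\<^esub>"
    hence "inv\<^bsub>Grp\<^esub> b = inv\<^bsub>Grp\<^esub> a" using Gr.inv_equality carr by simp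
    thus "b = a" using Gr.inv_inv carr by (metis UNIV_I)
  qed (simp add: carr)
  have "\<rho> = {xs. length xs = n \<and> finprod Grp (\<lambda>i. \<phi> i (xs ! i)) {..<n} = \<one>\<^bsub>Grp\<^esub>}"
    by (auto simp: set_eq_iff char prodeq inveq)
  thus ?thesis using grp carr bij by blast
qed

end
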